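(* Let $G=(V,E)$ be a finite connected graph satisfying CD$(F;0)$ for some CD-function $F$, with relaxation function $\varphi$. Let $u:[0,\infty)\times V\to(0,\infty)$ solve the heat equation on $G$. Then for all $0<t_1<t_2$ and $x_1,x_2\in V$, $$u(t_1,x_1)\le u(t_2,x_2)\exp\Big(\int_{t_1}^{t_2}\varphi(t)\,dt\Big)\exp\Big(\frac{2\mu_{max}\,d(x_1,x_2)^2}{w_{min}(t_2-t_1)}\Big),$$ where $\mu_{max}=\max_V\mu$, $w_{min}=\min_{xy\in E}w_{xy}$ and $d$ is the combinatorial graph distance.
   Context: Graphs are undirected and locally finite; $x\sim y$ means $xy\in E$; each edge has a weight $w_{xy}=w_{yx}>0$; $\mu:V\to(0,\infty)$. The Laplacian is $\Delta u(x)=\frac1{\mu(x)}\sum_{y\sim x}w_{xy}(u(y)-u(x))$ and $L:=-\Delta$. For $H:\mathbb R\to\mathbb R$, $\Psi_H(v)(x)=\frac1{\mu(x)}\sum_{y\sim x}w_{xy}H(v(y)-v(x))$; $\Upsilon(z)=e^z-1-z$. A CD-function is a continuous $F:[0,\infty)\to[0,\infty)$ with $F(0)=0$, $F(x)/x$ strictly increasing on $(0,\infty)$, $\int_1^\infty dr/F(r)<\infty$. Its relaxation function is the unique positive solution $\varphi$ on $(0,\infty)$ of $\dot\varphi+F(\varphi)=0$ with $\varphi(0+)=\infty$. $G$ satisfies CD$(F;0)$ if for every $x\in V$ and every $v:V\to\mathbb R$ with $Lv(x)>0$ and $Lv(x)\ge Lv(y)$ for all $y\sim x$, one has $\Delta\Psi_{\Upsilon'}(v)(x)\ge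 F(Lv(x))$. A solution of the heat equation is $u(t,x)$, $C^1$ in $t$, with $\partial_tu=\Delta u$ on $[0,\infty)\times V$. *)

theory Defs
  imports "HOL-Analysis.Analysis"
begin

text \<open>A weighted graph is given by a vertex set V, an edge relation E (x \<sim> y iff E x y),
  edge weights w and a vertex measure mu. Functions on V are functions on the ambient type.\<close>

definition weighted_graph ::
  "'a set \<Rightarrow> ('a \<Rightarrow> 'a \<Rightarrow> bool) \<Rightarrow> ('a \<Rightarrow> 'a \<Rightarrow> real) \<Rightarrow> ('a \<Rightarrow> real) \<Rightarrow> bool" where
  "weighted_graph V E w mu \<longleftrightarrow>
     (\<forall>x y. E x y \<longrightarrow> x \<in> V \<and> y \<in> V) \<and>
     (\<forall>x y. E x y \<longrightarrow> E y x) \<and>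
     (\<forall>x y. E x y \<longrightarrow> w x y = w y x \<and> w x y > 0) \<and>
     (\<forall>x\<in>V. mu x > 0)"

definition nbrs :: "'a set \<Rightarrow> ('a \<Rightarrow> 'a \<Rightarrow> bool) \<Rightarrow> 'a \<Rightarrow> 'a set" where
  "nbrs V E x = {y \<in> V. E x y}"

definition is_walk :: "'a set \<Rightarrow> ('a \<Rightarrow> 'a \<Rightarrow> bool) \<Rightarrow> 'a list \<Rightarrow> bool" where
  "is_walk V E p \<longleftrightarrow> p \<noteq> [] \<and> set p \<subseteq> V \<and> (\<forall>i. Suc i < length p \<longrightarrow> E (p ! i) (p ! Suc i))"

definition connected_graph :: "'a set \<Rightarrow> ('a \<Rightarrow> 'a \<Rightarrow> bool) \<Rightarrow> bool" where
  "connected_graph V E \<longleftrightarrow> V \<noteq> {} \<and>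
     (\<forall>x\<in>V. \<forall>y\<in>V. \<exists>p. is_walk V E p \<and> hd p = x \<and> last p = y)"

definition graph_dist :: "'a set \<Rightarrow> ('a \<Rightarrow> 'a \<Rightarrow> bool) \<Rightarrow> 'a \<Rightarrow> 'a \<Rightarrow> nat" where
  "graph_dist V E x y = (LEAST n. \<exists>p. is_walk V E p \<and> hd p = x \<and> last p = y \<and> length p = Suc n)"

definition laplacian ::
  "'a set \<Rightarrow> ('a \<Rightarrow> 'a \<Rightarrow> bool) \<Rightarrow> ('a \<Rightarrow> 'a \<Rightarrow> real) \<Rightarrow> ('a \<Rightarrow> real) \<Rightarrow> ('a \<Rightarrow> real) \<Rightarrow> 'a \<Rightarrow> real" where
  "laplacian V E w mu u x = (1 / mu x) * (\<Sum>y\<in>nbrs V E x. w x y * (u y - u x))"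

definition Psi ::
  "'a set \<Rightarrow> ('a \<Rightarrow> 'a \<Rightarrow> bool) \<Rightarrow> ('a \<Rightarrow> 'a \<Rightarrow> real) \<Rightarrow> ('a \<Rightarrow> real) \<Rightarrow> (real \<Rightarrow> real) \<Rightarrow> ('a \<Rightarrow> real) \<Rightarrow> 'a \<Rightarrow> real" where
  "Psi V E w mu H v x = (1 / mu x) * (\<Sum>y\<in>nbrs V E x. w x y * H (v y - v x))"

definition Upsilon :: "real \<Rightarrow> real" where
  "Upsilon z = exp z - 1 - z"

definition CD_function :: "(real \<Rightarrow> real) \<Rightarrow> bool" where
  "CD_function F \<longleftrightarrow>
     continuous_on {0..} F \<and> (\<forall>x\<ge>0. F x \<ge> 0) \<and> F 0 = 0 \<and>
     strict_mono_on {0<..} (\<lambda>x. F x / x) \<and>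
     (\<lambda>r. 1 / F r) integrable_on {1..}"

definition relaxation_function :: "(real \<Rightarrow> real) \<Rightarrow> (real \<Rightarrow> real) \<Rightarrow> bool" where
  "relaxation_function F phi \<longleftrightarrow>
     (\<forall>t>0. phi t > 0 \<and> (phi has_real_derivative - F (phi t)) (at t)) \<and>
     filterlim phi at_top (at_right 0)"

definition CD ::
  "'a set \<Rightarrow> ('a \<Rightarrow> 'a \<Rightarrow> bool) \<Rightarrow> ('a \<Rightarrow> 'a \<Rightarrow> real) \<Rightarrow> ('a \<Rightarrow> real) \<Rightarrow> (real \<Rightarrow> real) \<Rightarrow> bool" where
  "CD V E w mu F \<longleftrightarrow>
     (\<forall>x\<in>V. \<forall>v :: 'a \<Rightarrow> real.
        (let L = (\<lambda>z. - laplacian V E w mu v z) in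
         L x > 0 \<and> (\<forall>y\<in>nbrs V E x. L x \<ge> L y) \<longrightarrow>
         laplacian V E w mu (Psi V E w mu (deriv Upsilon) v) x \<ge> F (L x)))"

definition heat_solution ::
  "'a set \<Rightarrow> ('a \<Rightarrow> 'a \<Rightarrow> bool) \<Rightarrow> ('a \<Rightarrow> 'a \<Rightarrow> real) \<Rightarrow> ('a \<Rightarrow> real) \<Rightarrow> (real \<Rightarrow> 'a \<Rightarrow> real) \<Rightarrow> bool" where
  "heat_solution V E w mu u \<longleftrightarrow>
     (\<forall>x\<in>V. (\<forall>t\<ge>0. ((\<lambda>s. u s x) has_real_derivative laplacian V E w mu (u t) x) (at t within {0..}))
        \<and> continuous_on {0..} (\<lambda>t. laplacian V E w mu (u t) x))"

end

theory Submission imports Defs begin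

lemma deriv_Ups: "deriv Upsilon z = exp z - 1"
  unfolding Upsilon_def
  by (rule DERIV_imp_deriv) (auto intro!: derivative_eq_intros)

lemma Ups_nonneg: "Upsilon z \<ge> 0"
  using exp_ge_add_one_self[of z] unfolding Upsilon_def by linarith

lemma Ups_sq: "z \<ge> 0 \<Longrightarrow> Upsilon z \<ge> z\<^sup>2 / 2"
  unfolding Upsilon_def using exp_lower_Taylor_quadratic[of z] by simp

locale heat =
  fixes V :: "'a set" and E :: "'a \<Rightarrow> 'a \<Rightarrow> bool" and w :: "'a \<Rightarrow> 'a \<Rightarrow> real"
    and mu :: "'a \<Rightarrow> real" and u :: "real \<Rightarrow> 'a \<Rightarrow> real"
  assumes fin: "finite V" and wg: "weighted_graph V E w mu"
    and hs: "heat_solution V E w mu u" and pos: "\<forall>t\<ge>0. \<forall>x\<in>V. u t x > 0"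
begin

definition "v t z = ln (u t z)"
definition "Lv t z = - laplacian V E w mu (v t) z"
definition "P t z = Psi V E w mu (deriv Upsilon) (v t) z"

lemma nbrsV: "nbrs V E x \<subseteq> V" unfolding nbrs_def by auto
lemma fin_nbrs: "finite (nbrs V E x)" using fin nbrsV finite_subset by blast
lemma mu_pos: "x \<in> V \<Longrightarrow> mu x > 0" using wg unfolding weighted_graph_def by auto
lemma w_pos: "E x y \<Longrightarrow> w x y > 0" using wg unfolding weighted_graph_def by auto
lemma w_sym: "E x y \<Longrightarrow> w x y = w y x" using wg unfolding weighted_graph_def by auto
lemma E_sym: "E x y \<Longrightarrow> E y x" using wg unfolding weighted_graph_def by auto
lemma E_V: "E x y \<Longrightarrow> x \<in> V \<and> y \<in> V" using wg unfolding weighted_graph_def by auto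

lemma u_deriv: "x \<in> V \<Longrightarrow> t > 0 \<Longrightarrow>
   ((\<lambda>s. u s x) has_real_derivative laplacian V E w mu (u t) x) (at t)"
proof -
  assume "x \<in> V" "t > 0"
  hence "((\<lambda>s. u s x) has_real_derivative laplacian V E w mu (u t) x) (at t within {0..})"
    using hs unfolding heat_solution_def by auto
  moreover have "at t within {0..} = at t"
    using \<open>t > 0\<close> by (intro at_within_interior) (simp add: interior_real_atLeast)
  ultimately show ?thesis by simp
qed

lemma u_cont: "x \<in> V \<Longrightarrow> continuous_on {0..} (\<lambda>s. u s x)"
  using hs unfolding heat_solution_def by (intro DERIV_continuous_on) auto

lemma v_cont: "x \<in> V \<Longrightarrow> continuous_on {0..} (\<lambda>s. v s x)"
  unfolding v_def using pos
  by (intro continuous_intros u_cont) (simp_all, metis atLeast_iff order_less_irrefl)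

lemma Lv_cont: "x \<in> V \<Longrightarrow> continuous_on {0..} (\<lambda>s. Lv s x)"
  unfolding Lv_def laplacian_def
  using nbrsV by (intro continuous_intros v_cont) auto

lemma P_eq: "x \<in> V \<Longrightarrow> t \<ge> 0 \<Longrightarrow> P t x = laplacian V E w mu (u t) x / u t x"
proof -
  assume x: "x \<in> V" "t \<ge> 0"
  have "P t x = (1 / mu x) * (\<Sum>y\<in>nbrs V E x. w x y * (u t y / u t x - 1))"
    unfolding P_def Psi_def deriv_Ups v_def
    using nbrsV pos x
    by (intro arg_cong2[where f="(*)"] refl sum.cong) (auto simp: exp_diff)
  also have "\<dots> = (1 / mu x) * ((\<Sum>y\<in>nbrs V E x. w x y * (u t y - u t x)) / u t x)"
  proof -
    have "\<And>y. w x y * (u t y / u t x - 1) = w x y * (u t y - u t x) / u t x"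
    proof -
      fix y have "u t x > 0" using pos x by auto
      thus "w x y * (u t y / u t x - 1) = w x y * (u t y - u t x) / u t x" by (simp add: field_simps)
    qed
    thus ?thesis by (simp add: sum_divide_distrib)
  qed
  finally show ?thesis unfolding laplacian_def by simp
qed

lemma v_deriv: "x \<in> V \<Longrightarrow> t > 0 \<Longrightarrow> ((\<lambda>s. v s x) has_real_derivative P t x) (at t)"
proof -
  assume x: "x \<in> V" "t > 0"
  have "((\<lambda>s. ln (u s x)) has_real_derivative inverse (u t x) * laplacian V E w mu (u t) x) (at t)"
    using pos x by (intro DERIV_chain2[OF DERIV_ln u_deriv]) auto
  thus ?thesis using P_eq[of x t] x unfolding v_def by (simp add: divide_inverse mult.commute)
qed

lemma Lv_deriv: "x \<in> V \<Longrightarrow> t > 0 \<Longrightarrow>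
   ((\<lambda>s. Lv s x) has_real_derivative - laplacian V E w mu (P t) x) (at t)"
proof -
  assume x: "x \<in> V" "t > 0"
  have d: "((\<lambda>s. \<Sum>y\<in>nbrs V E x. w x y * (v s y - v s x)) has_real_derivative
      (\<Sum>y\<in>nbrs V E x. w x y * (P t y - P t x))) (at t)"
    using nbrsV x by (intro DERIV_sum DERIV_cmult DERIV_diff v_deriv) auto
  show ?thesis unfolding Lv_def laplacian_def
    using DERIV_minus[OF DERIV_cmult[OF d, of "1 / mu x"]] by simp
qed

lemma P_Lv: "x \<in> V \<Longrightarrow> P t x + Lv t x = Psi V E w mu Upsilon (v t) x"
  unfolding P_def Lv_def Psi_def laplacian_def deriv_Ups Upsilon_def
  by (simp add: algebra_simps sum_subtractf[symmetric] sum_distrib_left)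

lemma P_ge: "x \<in> V \<Longrightarrow> E x y \<Longrightarrow> P t x + Lv t x \<ge> (w x y / mu x) * Upsilon (v t y - v t x)"
proof -
  assume x: "x \<in> V" "E x y"
  have y: "y \<in> nbrs V E x" using x E_V unfolding nbrs_def by auto
  have nn: "\<And>z. E x z \<Longrightarrow> 0 \<le> w x z * Upsilon (v t z - v t x)"
    by (simp add: Ups_nonneg w_pos less_imp_le)
  have "w x y * Upsilon (v t y - v t x) \<le> (\<Sum>z\<in>nbrs V E x. w x z * Upsilon (v t z - v t x))"
    using y fin_nbrs nn unfolding nbrs_def
    by (intro member_le_sum) auto
  hence "(w x y / mu x) * Upsilon (v t y - v t x) \<le> (1 / mu x) * (\<Sum>z\<in>nbrs V E x. w x z * Upsilon (v t z - v t x))"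
    using mu_pos[OF x(1)] by (simp add: divide_right_mono)
  thus ?thesis using P_Lv[OF x(1)] unfolding Psi_def by simp
qed

lemma P_ge0: "x \<in> V \<Longrightarrow> P t x + Lv t x \<ge> 0"
proof -
  assume x: "x \<in> V"
  have "0 \<le> (\<Sum>z\<in>nbrs V E x. w x z * Upsilon (v t z - v t x))"
    by (rule sum_nonneg) (simp add: Ups_nonneg w_pos less_imp_le nbrs_def)
  thus ?thesis using P_Lv[OF x, of t] mu_pos[OF x] unfolding Psi_def by simp
qed

end

locale heatCD = heat +
  fixes F phi :: "real \<Rightarrow> real"
  assumes CDf: "CD_function F" and rel: "relaxation_function F phi" and cd: "CD V E w mu F"
begin

lemma phi_pos: "t > 0 \<Longrightarrow> phi t > 0" using rel unfolding relaxation_function_def by auto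
lemma phi_deriv: "t > 0 \<Longrightarrow> (phi has_real_derivative - F (phi t)) (at t)"
  using rel unfolding relaxation_function_def by auto
lemma phi_cont: "a > 0 \<Longrightarrow> continuous_on {a..b} phi"
  by (rule DERIV_continuous_on, rule has_field_derivative_at_within, rule phi_deriv) auto

lemma F_nonneg: "x \<ge> 0 \<Longrightarrow> F x \<ge> 0" using CDf unfolding CD_function_def by auto
lemma F_ratio: "0 < a \<Longrightarrow> a < b \<Longrightarrow> F a / a < F b / b"
  using CDf unfolding CD_function_def by (auto simp: strict_mono_on_def)

lemma F_mono: assumes "0 < a" "a \<le> b" shows "F a \<le> F b"
proof (cases "a = b")
  case False
  hence r: "F a / a < F b / b" using F_ratio assms by auto
  have "F a = a * (F a / a)" using assms by simp
  also have "\<dots> \<le> b * (F a / a)" using assms F_nonneg[of a] by (intro mult_right_mono) auto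
  also have "\<dots> \<le> b * (F b / b)" using r assms by (intro mult_left_mono) auto
  also have "\<dots> = F b" using assms by simp
  finally show ?thesis .
qed simp

lemma F_strict: assumes "0 < p" "0 < e" shows "(1 + e) * F p < F ((1 + e) * p)"
proof -
  have r: "F p / p < F ((1+e)*p) / ((1+e)*p)" using F_ratio assms by auto
  have "(1 + e) * F p = ((1+e)*p) * (F p / p)" using assms by simp
  also have "\<dots> < ((1+e)*p) * (F ((1+e)*p) / ((1+e)*p))"
    using r assms by (intro mult_strict_left_mono) auto
  also have "\<dots> = F ((1 + e) * p)" using assms by simp
  finally show ?thesis .
qed

lemma Lv_bounded: "t0 \<ge> 0 \<Longrightarrow> \<exists>B. \<forall>t\<in>{0..t0}. \<forall>x\<in>V. \<bar>Lv t x\<bar> \<le> B"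
proof -
  assume "t0 \<ge> 0"
  have "bounded (\<Union>x\<in>V. (\<lambda>t. Lv t x) ` {0..t0})"
  proof (intro bounded_UN ballI fin)
    fix x assume "x \<in> V"
    have "continuous_on {0..t0} (\<lambda>t. Lv t x)"
      by (rule continuous_on_subset[OF Lv_cont[OF \<open>x \<in> V\<close>]]) auto
    thus "bounded ((\<lambda>t. Lv t x) ` {0..t0})"
      by (intro compact_imp_bounded compact_continuous_image) auto
  qed
  then obtain B where "\<forall>y\<in>(\<Union>x\<in>V. (\<lambda>t. Lv t x) ` {0..t0}). \<bar>y\<bar> \<le> B"
    unfolding bounded_real by blast
  thus ?thesis by auto
qed

lemma LYe: assumes x0: "x0 \<in> V" and t0: "t0 > 0" and e: "e > 0"
  shows "Lv t0 x0 \<le> (1 + e) * phi t0"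
proof (rule ccontr)
  assume "\<not> ?thesis"
  hence big: "Lv t0 x0 > (1 + e) * phi t0" by simp
  define psi where "psi t = (1 + e) * phi t" for t
  have psi_ge: "t > 0 \<Longrightarrow> psi t \<ge> phi t" for t using phi_pos[of t] e by (simp add: psi_def)
  obtain B where B: "\<forall>t\<in>{0..t0}. \<forall>x\<in>V. \<bar>Lv t x\<bar> \<le> B" using Lv_bounded t0 by force
  have "eventually (\<lambda>t. phi t > B) (at_right 0)"
    using rel unfolding relaxation_function_def by (simp add: filterlim_at_top_dense)
  then obtain d where d: "d > 0" "\<And>t. 0 < t \<Longrightarrow> t < d \<Longrightarrow> phi t > B"
    unfolding eventually_at_right_field by auto
  have low: "\<And>t x. 0 < t \<Longrightarrow> t < d \<Longrightarrow> t \<le> t0 \<Longrightarrow> x \<in> V \<Longrightarrow> Lv t x < psi t"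
  proof -
    fix t x assume "0 < t" "t < d" "t \<le> t0" "x \<in> V"
    hence "\<bar>Lv t x\<bar> \<le> B" using B by auto
    hence "Lv t x \<le> B" by linarith
    also have "B < phi t" using d \<open>0 < t\<close> \<open>t < d\<close> by auto
    also have "\<dots> \<le> psi t" using psi_ge \<open>0 < t\<close> by auto
    finally show "Lv t x < psi t" .
  qed
  have t0d: "t0 \<ge> d"
  proof (rule ccontr)
    assume "\<not> t0 \<ge> d" hence "t0 < d" by simp
    from low[OF t0 this order_refl x0] big show False unfolding psi_def by linarith
  qed
  define a where "a = d / 2"
  have a: "0 < a" "a < d" "a \<le> t0" using d t0d by (auto simp: a_def)
  define S where "S = {t \<in> {a..t0}. \<exists>x\<in>V. psi t \<le> Lv t x}"
  have S_eq: "S = (\<Union>x\<in>V. {a..t0} \<inter> (\<lambda>t. Lv t x - psi t) -` {0..})"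
    unfolding S_def by auto
  have "closed S" unfolding S_eq
  proof (intro closed_UN fin ballI continuous_closed_preimage)
    fix x assume "x \<in> V"
    have "continuous_on {a..t0} (\<lambda>t. Lv t x)"
      by (rule continuous_on_subset[OF Lv_cont[OF \<open>x \<in> V\<close>]]) (use a in auto)
    moreover have "continuous_on {a..t0} psi" unfolding psi_def
      using phi_cont[OF a(1)] by (intro continuous_intros)
    ultimately show "continuous_on {a..t0} (\<lambda>t. Lv t x - psi t)" by (intro continuous_intros)
  qed auto
  have t0S: "t0 \<in> S" unfolding S_def using a x0 big by (auto simp: psi_def intro!: bexI[of _ x0])
  have bdd: "bdd_below S" unfolding S_def by (rule bdd_belowI[of _ a]) auto
  define s where "s = Inf S"
  have sS: "s \<in> S" unfolding s_def using closed_contains_Inf[OF _ bdd \<open>closed S\<close>] t0S by auto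
  have s_le: "\<And>t. t \<in> S \<Longrightarrow> s \<le> t" unfolding s_def using bdd by (simp add: cInf_lower)
  from sS obtain x where x: "x \<in> V" "psi s \<le> Lv s x" "a \<le> s" "s \<le> t0" unfolding S_def by auto
  have sd: "s \<ge> d"
  proof (rule ccontr)
    assume "\<not> s \<ge> d" hence "s < d" by simp
    have "0 < s" using x(3) a(1) by linarith
    from low[OF this \<open>s < d\<close> x(4) x(1)] x(2) show False by linarith
  qed
  have s0: "s > 0" using sd d by auto
  have "\<exists>z. z \<in> V \<and> (\<forall>y\<in>V. Lv s y \<le> Lv s z)"
  proof -
    have ne: "(\<lambda>y. Lv s y) ` V \<noteq> {}" using x by auto
    obtain z where "z \<in> V" "Lv s z = Max ((\<lambda>y. Lv s y) ` V)"
      using Max_in[OF finite_imageI[OF fin] ne] by auto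
    thus ?thesis using fin by auto
  qed
  then obtain xm where xm: "xm \<in> V" "\<And>y. y \<in> V \<Longrightarrow> Lv s y \<le> Lv s xm" by blast
  have xm_big: "psi s \<le> Lv s xm" using x(2) xm(2)[OF x(1)] by linarith
  have psipos: "psi s > 0" unfolding psi_def using phi_pos[OF s0] e by (intro mult_pos_pos) auto
  have cdall: "\<forall>x\<in>V. \<forall>v. (- laplacian V E w mu v x > 0 \<and> (\<forall>y\<in>nbrs V E x. - laplacian V E w mu v x \<ge> - laplacian V E w mu v y))
      \<longrightarrow> laplacian V E w mu (Psi V E w mu (deriv Upsilon) v) x \<ge> F (- laplacian V E w mu v x)"
    using cd unfolding CD_def Let_def by simp
  have cdx: "laplacian V E w mu (P s) xm \<ge> F (Lv s xm)"
  proof -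
    have "Lv s xm > 0" using xm_big psipos by linarith
    moreover have "\<forall>y\<in>nbrs V E xm. Lv s xm \<ge> Lv s y" using xm nbrsV by blast
    ultimately have "- laplacian V E w mu (v s) xm > 0 \<and> (\<forall>y\<in>nbrs V E xm. - laplacian V E w mu (v s) xm \<ge> - laplacian V E w mu (v s) y)"
      unfolding Lv_def by simp
    hence "laplacian V E w mu (Psi V E w mu (deriv Upsilon) (v s)) xm \<ge> F (- laplacian V E w mu (v s) xm)"
      using cdall xm(1) by blast
    moreover have "Psi V E w mu (deriv Upsilon) (v s) = P s" unfolding P_def by (rule ext) simp
    ultimately show ?thesis unfolding Lv_def by simp
  qed
  have Fge: "F (Lv s xm) \<ge> F (psi s)" using F_mono[OF psipos xm_big] .
  have Fstr: "(1 + e) * F (phi s) < F (psi s)" unfolding psi_def using F_strict[OF phi_pos[OF s0] e] .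
  define h where "h t = Lv t xm - psi t" for t
  have hd: "(h has_real_derivative (- laplacian V E w mu (P s) xm - (1 + e) * (- F (phi s)))) (at s)"
    unfolding h_def psi_def by (intro DERIV_diff DERIV_cmult Lv_deriv phi_deriv xm s0)
  have neg: "- laplacian V E w mu (P s) xm - (1 + e) * (- F (phi s)) < 0" using cdx Fge Fstr by linarith
  obtain dd where dd: "dd > 0" "\<And>k. k > 0 \<Longrightarrow> k < dd \<Longrightarrow> h s < h (s - k)"
    using DERIV_neg_dec_left[OF hd neg] by auto
  define k where "k = min dd (s - a) / 2"
  have k: "k > 0" "k < dd" "k < s - a" using dd sd a by (auto simp: k_def)
  have "h (s - k) > h s" using dd(2)[OF k(1,2)] .
  moreover have "h s \<ge> 0" using xm_big unfolding h_def by linarith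
  ultimately have "psi (s - k) \<le> Lv (s - k) xm" unfolding h_def by linarith
  moreover have "a \<le> s - k" "s - k \<le> t0" using k x(4) by linarith+
  ultimately have "s - k \<in> S" unfolding S_def using xm(1) by auto
  hence "s \<le> s - k" by (rule s_le)
  thus False using k by auto
qed

lemma LY: assumes x0: "x0 \<in> V" and t0: "t0 > 0" shows "Lv t0 x0 \<le> phi t0"
proof (rule ccontr)
  assume "\<not> ?thesis"
  hence big: "Lv t0 x0 > phi t0" by simp
  have p: "phi t0 > 0" using phi_pos t0 by auto
  define e where "e = (Lv t0 x0 - phi t0) / (2 * phi t0)"
  have e: "e > 0" using big p by (simp add: e_def)
  have "e * phi t0 = (Lv t0 x0 - phi t0) / 2" using p unfolding e_def by (simp add: field_simps)
  hence "(1 + e) * phi t0 < Lv t0 x0" using big by (simp add: distrib_right)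
  thus False using LYe[OF x0 t0 e] by linarith
qed


lemma mono_v: assumes x: "x \<in> V" and s: "0 < s" "s \<le> t"
  and Pc: "continuous_on {s..t} Phi" and Pd: "\<And>r. s < r \<Longrightarrow> r < t \<Longrightarrow> (Phi has_real_derivative phi r) (at r)"
  shows "v s x + Phi s \<le> v t x + Phi t"
proof -
  have "(\<lambda>r. v r x + Phi r) s \<le> (\<lambda>r. v r x + Phi r) t"
  proof (rule DERIV_nonneg_imp_increasing_open[OF s(2)])
    fix r assume r: "s < r" "r < t"
    have "((\<lambda>r. v r x + Phi r) has_real_derivative P r x + phi r) (at r)"
      using r s by (intro DERIV_add v_deriv x Pd) auto
    moreover have "P r x + phi r \<ge> 0" using P_ge0[OF x, of r] LY[OF x, of r] r s by linarith
    ultimately show "\<exists>y. ((\<lambda>r. v r x + Phi r) has_real_derivative y) (at r) \<and> y \<ge> 0" by blast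
  next
    have "continuous_on {s..t} (\<lambda>r. v r x)"
      by (rule continuous_on_subset[OF v_cont[OF x]]) (use s in auto)
    thus "continuous_on {s..t} (\<lambda>r. v r x + Phi r)" using Pc by (intro continuous_intros)
  qed
  thus ?thesis by simp
qed

lemma edge: assumes x: "x \<in> V" and Exy: "E x y" and s: "0 < s" "s < t"
  and c: "0 < c" "c \<le> w y x / mu y"
  and Pc: "continuous_on {s..t} Phi" and Pd: "\<And>r. s < r \<Longrightarrow> r < t \<Longrightarrow> (Phi has_real_derivative phi r) (at r)"
  shows "v s x + Phi s \<le> v t y + Phi t + 2 / (c * (t - s))"
proof (rule ccontr)
  define A where "A m = v m x + Phi m" for m
  define B where "B m = v m y + Phi m" for m
  define K where "K = 2 / (c * (t - s))"
  have Kpos: "K > 0" using c s by (simp add: K_def)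
  have y: "y \<in> V" using E_V[OF Exy] by auto
  have Eyx: "E y x" using E_sym[OF Exy] .
  assume "\<not> ?thesis"
  hence big: "A s > B t + K" unfolding A_def B_def K_def by linarith
  define D where "D m = A s - B m" for m
  have Bmono: "B m \<le> B t" if "s \<le> m" "m \<le> t" for m
  proof -
    have "continuous_on {m..t} Phi" by (rule continuous_on_subset[OF Pc]) (use that in auto)
    thus ?thesis unfolding B_def using that s
      by (intro mono_v[OF y]) (auto intro: Pd)
  qed
  have Amono: "A s \<le> A m" if "s \<le> m" "m \<le> t" for m
  proof -
    have "continuous_on {s..m} Phi" by (rule continuous_on_subset[OF Pc]) (use that in auto)
    thus ?thesis unfolding A_def using that s
      by (intro mono_v[OF x]) (auto intro: Pd)
  qed
  have Dbig: "D m > K" if "s \<le> m" "m \<le> t" for m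
    using Bmono[OF that] big unfolding D_def by linarith
  define R where "R m = inverse (D m) - c * m / 2" for m
  have "R s \<le> R t"
  proof (rule DERIV_nonneg_imp_increasing_open[of s t R])
    show "s \<le> t" using s by simp
  next
    fix m assume m: "s < m" "m < t"
    have Bd: "(B has_real_derivative P m y + phi m) (at m)"
      unfolding B_def using m s by (intro DERIV_add v_deriv y Pd) auto
    have Dd: "(D has_real_derivative - (P m y + phi m)) (at m)"
      unfolding D_def using DERIV_diff[OF DERIV_const Bd] by simp
    have Dm: "D m > K" using Dbig m by auto
    have Dne: "D m \<noteq> 0" using Dm Kpos by auto
    have Id: "((\<lambda>m. inverse (D m)) has_real_derivative (- (- (P m y + phi m) * inverse (D m ^ Suc (Suc 0))))) (at m)"
      by (rule DERIV_inverse_fun[OF Dd Dne])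
    have Cd: "((\<lambda>m. c * m / 2) has_real_derivative c / 2) (at m)"
      by (auto intro!: derivative_eq_intros)
    have Rd: "(R has_real_derivative (- (- (P m y + phi m) * inverse (D m ^ 2)) - c / 2)) (at m)"
      unfolding R_def using DERIV_diff[OF Id Cd] by (simp add: numeral_2_eq_2)
    have gap: "v m x - v m y \<ge> D m"
      using Amono[of m] m unfolding D_def A_def B_def by auto
    have D0: "D m > 0" using Dm Kpos by linarith
    have "P m y + phi m \<ge> P m y + Lv m y" using LY[OF y, of m] m s by linarith
    also have "P m y + Lv m y \<ge> (w y x / mu y) * Upsilon (v m x - v m y)" using P_ge[OF y Eyx] .
    also have "(w y x / mu y) * Upsilon (v m x - v m y) \<ge> c * Upsilon (v m x - v m y)"
      using c Ups_nonneg by (intro mult_right_mono) auto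
    also have "c * Upsilon (v m x - v m y) \<ge> c * ((v m x - v m y)\<^sup>2 / 2)"
      using c Ups_sq[of "v m x - v m y"] gap D0 by (intro mult_left_mono) auto
    also have "c * ((v m x - v m y)\<^sup>2 / 2) \<ge> c * ((D m)\<^sup>2 / 2)"
      using c gap D0 by (intro mult_left_mono divide_right_mono power_mono) auto
    finally have key: "P m y + phi m \<ge> c * (D m)\<^sup>2 / 2" by simp
    have "(P m y + phi m) * inverse (D m ^ 2) \<ge> (c * (D m)\<^sup>2 / 2) * inverse (D m ^ 2)"
      using key by (intro mult_right_mono) auto
    also have "(c * (D m)\<^sup>2 / 2) * inverse (D m ^ 2) = c / 2" using Dne by (simp add: field_simps)
    finally have "(- (- (P m y + phi m) * inverse (D m ^ 2)) - c / 2) \<ge> 0" by (simp add: algebra_simps)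
    thus "\<exists>y. (R has_real_derivative y) (at m) \<and> y \<ge> 0" using Rd by blast
  next
    have "continuous_on {s..t} (\<lambda>m. v m y)"
      by (rule continuous_on_subset[OF v_cont[OF y]]) (use s in auto)
    hence "continuous_on {s..t} D" unfolding D_def B_def using Pc by (intro continuous_intros)
    moreover have "\<forall>m\<in>{s..t}. D m \<noteq> 0" using Dbig Kpos by force
    ultimately show "continuous_on {s..t} R" unfolding R_def by (intro continuous_intros) auto
  qed
  hence "inverse (D t) \<ge> inverse (D s) + c * (t - s) / 2" unfolding R_def by (simp add: algebra_simps diff_divide_distrib)
  moreover have "inverse (D s) > 0" using Dbig[of s] Kpos s by auto
  ultimately have i1: "inverse (D t) > c * (t - s) / 2" by linarith
  have Dt: "D t > K" using Dbig[of t] s by auto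
  have "inverse (D t) < inverse K" using Dt Kpos by (intro less_imp_inverse_less) auto
  also have "inverse K = c * (t - s) / 2" unfolding K_def by simp
  finally show False using i1 by linarith
qed


lemma chain: assumes walk: "is_walk V E p" and len: "length p = Suc n" and n: "n \<ge> 1"
  and t: "0 < t1" "t1 < t2" and c: "0 < c" "\<forall>i<n. c \<le> w (p ! Suc i) (p ! i) / mu (p ! Suc i)"
  and Pc: "continuous_on {t1..t2} Phi" and Pd: "\<And>r. t1 < r \<Longrightarrow> r < t2 \<Longrightarrow> (Phi has_real_derivative phi r) (at r)"
  shows "v t1 (p ! 0) + Phi t1 \<le> v t2 (p ! n) + Phi t2 + real n * (2 / (c * ((t2 - t1) / real n)))"
proof -
  define tau where "tau = (t2 - t1) / real n"
  define T where "T i = t1 + real i * tau" for i :: nat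
  define K where "K = 2 / (c * tau)"
  have tau: "tau > 0" using t n by (simp add: tau_def)
  have TS: "T (Suc i) = T i + tau" for i unfolding T_def by (simp add: algebra_simps)
  have Tn: "T n = t2" using n unfolding T_def tau_def by simp
  have Tge: "T i \<ge> t1" for i unfolding T_def using tau by simp
  have Tle: "T i \<le> t2" if "i \<le> n" for i
  proof -
    have "real i * tau \<le> real n * tau" using that tau by (intro mult_right_mono) auto
    thus ?thesis using Tn unfolding T_def by simp
  qed
  have V: "p ! i \<in> V" if "i < Suc n" for i using walk len that unfolding is_walk_def
    by (metis nth_mem subsetD)
  have main: "i \<le> n \<Longrightarrow> v t1 (p ! 0) + Phi t1 \<le> v (T i) (p ! i) + Phi (T i) + real i * K" for i
  proof (induction i)
    case 0 thus ?case unfolding T_def by simp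
  next
    case (Suc i)
    hence i: "i < n" by simp
    have IH: "v t1 (p ! 0) + Phi t1 \<le> v (T i) (p ! i) + Phi (T i) + real i * K" using Suc i by simp
    have E: "E (p ! i) (p ! Suc i)" using walk len i unfolding is_walk_def by auto
    have s0: "0 < T i" using Tge[of i] t by linarith
    have st: "T i < T (Suc i)" using TS tau by simp
    have cont: "continuous_on {T i..T (Suc i)} Phi"
      by (rule continuous_on_subset[OF Pc]) (use Tge Tle[of "Suc i"] i in auto)
    have der: "(Phi has_real_derivative phi r) (at r)" if "T i < r" "r < T (Suc i)" for r
      using Pd Tge[of i] Tle[of "Suc i"] i that by auto
    have "v (T i) (p ! i) + Phi (T i) \<le> v (T (Suc i)) (p ! Suc i) + Phi (T (Suc i)) + 2 / (c * (T (Suc i) - T i))"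
      using c i by (intro edge[OF V E s0 st c(1) _ cont der]) auto
    also have "2 / (c * (T (Suc i) - T i)) = K" unfolding K_def TS by simp
    finally show ?case using IH by (simp add: algebra_simps)
  qed
  show ?thesis using main[of n] Tn unfolding K_def tau_def by simp
qed

end

theorem theorem1p2:
  fixes V :: "'a set" and E :: "'a \<Rightarrow> 'a \<Rightarrow> bool" and w :: "'a \<Rightarrow> 'a \<Rightarrow> real"
    and mu :: "'a \<Rightarrow> real" and F phi :: "real \<Rightarrow> real" and u :: "real \<Rightarrow> 'a \<Rightarrow> real"
    and t1 t2 :: real and x1 x2 :: 'a
  assumes "finite V" and "weighted_graph V E w mu" and "connected_graph V E"
    and "CD_function F" and "relaxation_function F phi" and "CD V E w mu F"
    and "heat_solution V E w mu u" and "\<forall>t\<ge>0. \<forall>x\<in>V. u t x > 0"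
    and "0 < t1" and "t1 < t2" and "x1 \<in> V" and "x2 \<in> V"
  shows "u t1 x1 \<le> u t2 x2 * exp (integral {t1..t2} phi)
           * exp (2 * Max (mu ` V) * (real (graph_dist V E x1 x2))\<^sup>2
                  / (Min {w x y | x y. x \<in> V \<and> y \<in> V \<and> E x y} * (t2 - t1)))"
proof -
  interpret H: heatCD V E w mu u F phi
    using assms by unfold_locales auto
  note t = \<open>0 < t1\<close> \<open>t1 < t2\<close>
  define Phi where "Phi r = integral {t1..r} phi" for r
  have pc: "continuous_on {t1..t2} phi" using H.phi_cont t by auto
  have Pc: "continuous_on {t1..t2} Phi" unfolding Phi_def
    by (rule DERIV_continuous_on, rule integral_has_real_derivative[OF pc]) auto
  have Pd: "(Phi has_real_derivative phi r) (at r)" if "t1 < r" "r < t2" for r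
  proof -
    have "(Phi has_real_derivative phi r) (at r within {t1..t2})" unfolding Phi_def
      by (rule integral_has_real_derivative[OF pc]) (use that in auto)
    moreover have "at r within {t1..t2} = at r"
      using that by (intro at_within_interior) auto
    ultimately show ?thesis by simp
  qed
  have Phi1: "Phi t1 = 0" unfolding Phi_def by simp
  have Phi2: "Phi t2 = integral {t1..t2} phi" unfolding Phi_def by simp
  define n where "n = graph_dist V E x1 x2"
  define M where "M = Max (mu ` V)"
  define W where "W = {w x y | x y. x \<in> V \<and> y \<in> V \<and> E x y}"
  define Q where "Q = 2 * M * (real n)\<^sup>2 / (Min W * (t2 - t1))"
  obtain p0 where p0: "is_walk V E p0" "hd p0 = x1" "last p0 = x2"
    using assms(3) \<open>x1 \<in> V\<close> \<open>x2 \<in> V\<close> unfolding connected_graph_def by blast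
  have "\<exists>p. is_walk V E p \<and> hd p = x1 \<and> last p = x2 \<and> length p = Suc n"
    unfolding n_def graph_dist_def
  proof (rule LeastI_ex)
    have "p0 \<noteq> []" using p0 unfolding is_walk_def by auto
    thus "\<exists>k p. is_walk V E p \<and> hd p = x1 \<and> last p = x2 \<and> length p = Suc k"
      using p0 by (intro exI[of _ "length p0 - 1"] exI[of _ p0]) auto
  qed
  then obtain p where p: "is_walk V E p" "hd p = x1" "last p = x2" "length p = Suc n" by blast
  have p0x: "p ! 0 = x1" using p by (metis hd_conv_nth list.size(3) nat.distinct(1))
  have pnx: "p ! n = x2" using p by (metis last_conv_nth list.size(3) nat.distinct(1) diff_Suc_1)
  have Mx: "mu x \<le> M" if "x \<in> V" for x unfolding M_def using assms(1) that by (intro Max_ge) auto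
  have Mpos: "M > 0" using Mx[OF \<open>x1 \<in> V\<close>] H.mu_pos[OF \<open>x1 \<in> V\<close>] by linarith
  have key: "v t1 x1 + Phi t1 \<le> v t2 x2 + Phi t2 + Q" if "v = H.v" for v
  proof (cases "n = 0")
    case True
    hence "x1 = x2" using p0x pnx by simp
    hence "v t1 x1 + Phi t1 \<le> v t2 x2 + Phi t2"
      using H.mono_v[OF \<open>x1 \<in> V\<close> t(1) less_imp_le[OF t(2)] Pc Pd] that by simp
    thus ?thesis using True unfolding Q_def by simp
  next
    case False
    hence n1: "n \<ge> 1" by simp
    have V: "p ! i \<in> V" if "i < Suc n" for i using p that unfolding is_walk_def
      by (metis nth_mem subsetD)
    have finW: "finite W"
    proof -
      have "W \<subseteq> (\<lambda>(x, y). w x y) ` (V \<times> V)" unfolding W_def by auto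
      thus ?thesis using assms(1) by (meson finite_SigmaI finite_imageI finite_subset)
    qed
    have E01: "E (p ! 0) (p ! 1)" using p n1 unfolding is_walk_def by auto
    have Wne: "W \<noteq> {}" unfolding W_def using E01 V[of 0] V[of 1] n1 by auto
    have Wpos: "Min W > 0"
    proof -
      have "Min W \<in> W" using Min_in[OF finW Wne] .
      then obtain x y where "Min W = w x y" "E x y" unfolding W_def by auto
      thus ?thesis using H.w_pos by auto
    qed
    define c where "c = Min W / M"
    have c0: "c > 0" unfolding c_def using Wpos Mpos by simp
    have cle: "\<forall>i<n. c \<le> w (p ! Suc i) (p ! i) / mu (p ! Suc i)"
    proof (intro allI impI)
      fix i assume i: "i < n"
      have E: "E (p ! Suc i) (p ! i)" using p i H.E_sym unfolding is_walk_def by auto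
      have inW: "w (p ! Suc i) (p ! i) \<in> W" unfolding W_def using E V[of i] V[of "Suc i"] i by auto
      have "Min W \<le> w (p ! Suc i) (p ! i)" using Min_le[OF finW inW] .
      hence "c \<le> w (p ! Suc i) (p ! i) / M" unfolding c_def using Mpos by (simp add: divide_right_mono)
      also have "\<dots> \<le> w (p ! Suc i) (p ! i) / mu (p ! Suc i)"
        using Mx[OF V[of "Suc i"]] H.mu_pos[OF V[of "Suc i"]] H.w_pos[OF E] i
        by (intro divide_left_mono) auto
      finally show "c \<le> w (p ! Suc i) (p ! i) / mu (p ! Suc i)" .
    qed
    have "H.v t1 (p ! 0) + Phi t1 \<le> H.v t2 (p ! n) + Phi t2 + real n * (2 / (c * ((t2 - t1) / real n)))"
      by (rule H.chain[OF p(1) p(4) n1 t c0 cle Pc Pd])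
    also have "real n * (2 / (c * ((t2 - t1) / real n))) = Q"
      unfolding Q_def c_def using n1 Mpos Wpos t by (simp add: field_simps power2_eq_square)
    finally show ?thesis using p0x pnx that by simp
  qed
  have k: "H.v t1 x1 \<le> H.v t2 x2 + integral {t1..t2} phi + Q"
    using key[OF refl] Phi1 Phi2 by simp
  have u1: "u t1 x1 > 0" "u t2 x2 > 0" using assms t by auto
  have "u t1 x1 = exp (H.v t1 x1)" unfolding H.v_def using u1 by simp
  also have "\<dots> \<le> exp (H.v t2 x2 + integral {t1..t2} phi + Q)" using k by simp
  also have "\<dots> = u t2 x2 * exp (integral {t1..t2} phi) * exp Q"
    unfolding H.v_def using u1 by (simp add: exp_add)
  finally show ?thesis unfolding Q_def M_def W_def n_def .
qed

end
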